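(* Suppose $F$ is symmetric ($F(-i)=1-F(i)$ for all $i$), and consider the infinite-learning recommendation system with threshold $R\in(0,1)$. Let $\lambda=q_1/q_2$, $\sigma=q_H/q_L$ and, for $\lambda\ne1$, $\tilde i_\infty=\frac{(\sigma-1)(\lambda+1)}{2(1+\sigma)(\lambda-1)}$. Then (i) every receiver type $i\in[-1/2,1/2]$ buys the product if it is good; (ii) no receiver type buys the product if it is bad; (iii) if the product is controversial, then (a) if $\lambda>1$, all receiver types $i\ge\tilde i_\infty$ buy the product; (b) if $\lambda<1$, all receiver types $i\le\tilde i_\infty$ buy the product; (c) if $\lambda=1$, all receiver types buy the product if $\sigma\le1$ and none buys it if $\sigma>1$.
   Context: Setting. Consumer types are $i\in[-1/2,1/2]$, distributed according to a continuous cumulative distribution function $F$ with full support on $[-1/2,1/2]$. A product has a quality vector $(Q_1,Q_2)\in\{0,1\}^2$; a type-$i$ consumer gets payoff $(1/2+i)Q_1+(1/2-i)Q_2$. Version $(1,1)$ is called good, $(0,0)$ bad, and $(1,0),(0,1)$ controversial; their prior probabilities are $q_H,q_1,q_2,q_L$ (for $(1,1),(1,0),(0,1),(0,0)$), all strictly positive and summing to $1$. Given a threshold $R\in(0,1)$, each sender, with type drawn independently from $F$, gives a buy recommendation if her payoff from the product is at least $R$ and a don't-buy recommendation otherwise. In the infinite-learning system the receiver observes the recommendations of infinitely many such independent senders; this reveals whether the product is good, bad or controversial, and if controversial the receiver's posterior on $(1,0),(0,1)$ is $(q_1/(q_1+q_2),q_2/(q_1+q_2))$. The receiver of type $i$ buys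 the recommended product if its posterior expected payoff is at least $U_i^0=q_H+(1/2+i)q_1+(1/2-i)q_2$, the expected payoff of an unrecommended alternative, and otherwise buys the alternative. *)

theory Defs
  imports Complex_Main
begin

(* A quality vector (Q1,Q2) in {0,1}^2 is encoded as a pair of booleans. *)
type_synonym version = "bool \<times> bool"

definition payoff :: "real \<Rightarrow> version \<Rightarrow> real" where
  "payoff i v = (1/2 + i) * of_bool (fst v) + (1/2 - i) * of_bool (snd v)"

definition prior :: "real \<Rightarrow> real \<Rightarrow> real \<Rightarrow> real \<Rightarrow> version \<Rightarrow> real" where
  "prior qH q1 q2 qL v =
     (if v = (True, True) then qH else if v = (True, False) then q1
      else if v = (False, True) then q2 else qL)"

(* expected payoff U_i^0 of the unrecommended alternative *)
definition U0 :: "real \<Rightarrow> real \<Rightarrow> real \<Rightarrow> real \<Rightarrow> real \<Rightarrow> real" where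
  "U0 qH q1 q2 qL i = qH + (1/2 + i) * q1 + (1/2 - i) * q2"

(* what infinite learning reveals about the product *)
datatype revealed = Good | Bad | Controversial

definition versions_of :: "revealed \<Rightarrow> version set" where
  "versions_of c = (case c of
      Good \<Rightarrow> {(True, True)}
    | Bad \<Rightarrow> {(False, False)}
    | Controversial \<Rightarrow> {(True, False), (False, True)})"

definition posterior_payoff ::
  "real \<Rightarrow> real \<Rightarrow> real \<Rightarrow> real \<Rightarrow> revealed \<Rightarrow> real \<Rightarrow> real" where
  "posterior_payoff qH q1 q2 qL c i =
     (\<Sum>v\<in>versions_of c. prior qH q1 q2 qL v * payoff i v) /
     (\<Sum>v\<in>versions_of c. prior qH q1 q2 qL v)"

definition buys :: "real \<Rightarrow> real \<Rightarrow> real \<Rightarrow> real \<Rightarrow> revealed \<Rightarrow> real \<Rightarrow> bool" where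
  "buys qH q1 q2 qL c i \<longleftrightarrow> posterior_payoff qH q1 q2 qL c i \<ge> U0 qH q1 q2 qL i"

definition type_cdf :: "(real \<Rightarrow> real) \<Rightarrow> bool" where
  "type_cdf F \<longleftrightarrow> mono F \<and> continuous_on UNIV F
     \<and> (\<forall>x\<le>-1/2. F x = 0) \<and> (\<forall>x\<ge>1/2. F x = 1)
     \<and> strict_mono_on {-1/2..1/2} F"

definition i_tilde_inf :: "real \<Rightarrow> real \<Rightarrow> real" where
  "i_tilde_inf lam sig = ((sig - 1) * (lam + 1)) / (2 * (1 + sig) * (lam - 1))"

end

theory Submission
  imports Defs
begin

lemma buys_good: "qH > 0 \<Longrightarrow> buys qH q1 q2 qL Good i \<longleftrightarrow> 1 \<ge> U0 qH q1 q2 qL i"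
  by (simp add: buys_def posterior_payoff_def versions_of_def prior_def payoff_def)

lemma buys_bad: "buys qH q1 q2 qL Bad i \<longleftrightarrow> 0 \<ge> U0 qH q1 q2 qL i"
  by (simp add: buys_def posterior_payoff_def versions_of_def prior_def payoff_def)

lemma buys_contr:
  assumes "0 < q1" "0 < q2" "0 < qH" "0 < qL" "qH + q1 + q2 + qL = 1"
  shows "buys qH q1 q2 qL Controversial i \<longleftrightarrow>
     i * (q1 - q2) * (qH + qL) \<ge> (q1 + q2) * (qH - qL) / 2"
proof -
  have s: "q1 + q2 > 0" using assms by simp
  have "buys qH q1 q2 qL Controversial i \<longleftrightarrow>
     (q1 * (1/2 + i) + q2 * (1/2 - i)) / (q1 + q2) \<ge> qH + (1/2 + i) * q1 + (1/2 - i) * q2"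
    by (simp add: buys_def posterior_payoff_def versions_of_def prior_def payoff_def U0_def)
  also have "\<dots> \<longleftrightarrow> (q1 * (1/2 + i) + q2 * (1/2 - i)) \<ge> (q1 + q2) * (qH + (1/2 + i) * q1 + (1/2 - i) * q2)"
    using s by (simp only: pos_le_divide_eq mult.commute)
  also have "\<dots> \<longleftrightarrow> i * (q1 - q2) * (qH + qL) \<ge> (q1 + q2) * (qH - qL) / 2"
  proof -
    have qL: "qL = 1 - qH - q1 - q2" using assms(5) by simp
    have "(q1 * (1/2 + i) + q2 * (1/2 - i)) - (q1 + q2) * (qH + (1/2 + i) * q1 + (1/2 - i) * q2)
       = i * (q1 - q2) * (qH + qL) - (q1 + q2) * (qH - qL) / 2"
      unfolding qL by (simp add: field_simps)
    then show ?thesis by linarith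
  qed
  finally show ?thesis .
qed

theorem lemma4:
  fixes F :: "real \<Rightarrow> real" and R qH q1 q2 qL :: real
  assumes "type_cdf F"
    and "\<forall>i. F (- i) = 1 - F i"
    and "0 < R" and "R < 1"
    and "0 < qH" and "0 < q1" and "0 < q2" and "0 < qL"
    and "qH + q1 + q2 + qL = 1"
  shows "(\<forall>i\<in>{-1/2..1/2}. buys qH q1 q2 qL Good i)
    \<and> (\<forall>i\<in>{-1/2..1/2}. \<not> buys qH q1 q2 qL Bad i)
    \<and> (q1 / q2 > 1 \<longrightarrow>
          (\<forall>i\<in>{-1/2..1/2}. i \<ge> i_tilde_inf (q1 / q2) (qH / qL) \<longrightarrow>
             buys qH q1 q2 qL Controversial i))
    \<and> (q1 / q2 < 1 \<longrightarrow>
          (\<forall>i\<in>{-1/2..1/2}. i \<le> i_tilde_inf (q1 / q2) (qH / qL) \<longrightarrow>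
             buys qH q1 q2 qL Controversial i))
    \<and> (q1 / q2 = 1 \<longrightarrow>
          (qH / qL \<le> 1 \<longrightarrow> (\<forall>i\<in>{-1/2..1/2}. buys qH q1 q2 qL Controversial i))
        \<and> (qH / qL > 1 \<longrightarrow> (\<forall>i\<in>{-1/2..1/2}. \<not> buys qH q1 q2 qL Controversial i)))"
proof -
  note q = assms(5-9)
  have it: "i_tilde_inf (q1 / q2) (qH / qL) = (q1 + q2) * (qH - qL) / (2 * (qH + qL) * (q1 - q2))"
    if "q1 \<noteq> q2"
  proof -
    have "q1 - q2 \<noteq> 0" "qH + qL \<noteq> 0" "q2 \<noteq> 0" "qL \<noteq> 0" using q that by auto
    have 1: "qH / qL - 1 = (qH - qL) / qL" "1 + qH / qL = (qH + qL) / qL"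
       "q1 / q2 + 1 = (q1 + q2) / q2" "q1 / q2 - 1 = (q1 - q2) / q2"
      using q by (auto simp: field_simps)
    have D: "2 * (qH + qL) * (q1 - q2) \<noteq> 0" using q that by simp
    have n: "(qH - qL) / qL * ((q1 + q2) / q2) = ((q1 + q2) * (qH - qL)) / (qL * q2)" by simp
    have d: "2 * ((qH + qL) / qL) * ((q1 - q2) / q2) = (2 * (qH + qL) * (q1 - q2)) / (qL * q2)" by simp
    have z: "qL * q2 \<noteq> 0" using q by simp
    show ?thesis unfolding i_tilde_inf_def 1 n d using z by simp
  qed
  have A: "\<forall>i\<in>{-1/2..1/2}. buys qH q1 q2 qL Good i"
  proof
    fix i :: real assume "i \<in> {-1/2..1/2}"
    hence a: "1/2 + i \<le> 1" "1/2 - i \<le> 1" by auto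
    have "(1/2 + i) * q1 \<le> 1 * q1" "(1/2 - i) * q2 \<le> 1 * q2"
      using q a by (intro mult_right_mono; simp)+
    thus "buys qH q1 q2 qL Good i" using q unfolding buys_good[OF q(1)] U0_def by linarith
  qed
  have B: "\<forall>i\<in>{-1/2..1/2}. \<not> buys qH q1 q2 qL Bad i"
  proof
    fix i :: real assume "i \<in> {-1/2..1/2}"
    hence "(1/2 + i) * q1 \<ge> 0" "(1/2 - i) * q2 \<ge> 0" using q by auto
    thus "\<not> buys qH q1 q2 qL Bad i" using q by (simp add: buys_bad U0_def)
  qed
  have C: "q1 / q2 > 1 \<longrightarrow>
          (\<forall>i\<in>{-1/2..1/2}. i \<ge> i_tilde_inf (q1 / q2) (qH / qL) \<longrightarrow>
             buys qH q1 q2 qL Controversial i)"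
  proof (intro impI ballI)
    fix i assume g: "q1 / q2 > 1" and h: "i \<ge> i_tilde_inf (q1 / q2) (qH / qL)"
    have d: "q1 - q2 > 0" using g q by (simp add: field_simps)
    have p: "2 * (qH + qL) * (q1 - q2) > 0" using d q by simp
    have "(q1 + q2) * (qH - qL) / (2 * (qH + qL) * (q1 - q2)) \<le> i" using h it d by simp
    hence "(q1 + q2) * (qH - qL) \<le> i * (2 * (qH + qL) * (q1 - q2))"
      using p by (simp add: pos_divide_le_eq)
    thus "buys qH q1 q2 qL Controversial i" using q
      by (subst buys_contr) (auto simp: field_simps)
  qed
  have D: "q1 / q2 < 1 \<longrightarrow>
          (\<forall>i\<in>{-1/2..1/2}. i \<le> i_tilde_inf (q1 / q2) (qH / qL) \<longrightarrow>
             buys qH q1 q2 qL Controversial i)"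
  proof (intro impI ballI)
    fix i assume g: "q1 / q2 < 1" and h: "i \<le> i_tilde_inf (q1 / q2) (qH / qL)"
    have d: "q2 - q1 > 0" using g q by (simp add: field_simps)
    have p: "2 * (qH + qL) * (q2 - q1) > 0" using d q by simp
    have e: "(q1 + q2) * (qH - qL) / (2 * (qH + qL) * (q1 - q2)) =
       - ((q1 + q2) * (qH - qL) / (2 * (qH + qL) * (q2 - q1)))"
    proof -
      have "2 * (qH + qL) * (q1 - q2) = -(2 * (qH + qL) * (q2 - q1))" by (simp add: algebra_simps)
      then show ?thesis by (simp only: divide_minus_right)
    qed
    have "i \<le> - ((q1 + q2) * (qH - qL) / (2 * (qH + qL) * (q2 - q1)))" using h it d e by simp
    hence "(q1 + q2) * (qH - qL) / (2 * (qH + qL) * (q2 - q1)) \<le> - i" by linarith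
    hence "(q1 + q2) * (qH - qL) \<le> - i * (2 * (qH + qL) * (q2 - q1))"
      using p by (simp add: pos_divide_le_eq)
    thus "buys qH q1 q2 qL Controversial i" using q
      by (subst buys_contr) (auto simp: field_simps)
  qed
  have E: "q1 / q2 = 1 \<longrightarrow>
          (qH / qL \<le> 1 \<longrightarrow> (\<forall>i\<in>{-1/2..1/2}. buys qH q1 q2 qL Controversial i))
        \<and> (qH / qL > 1 \<longrightarrow> (\<forall>i\<in>{-1/2..1/2}. \<not> buys qH q1 q2 qL Controversial i))"
  proof
    assume "q1 / q2 = 1"
    hence e: "q1 = q2" using q by (simp add: field_simps)
    have "buys qH q1 q2 qL Controversial i \<longleftrightarrow> qH \<le> qL" for i
      using q e by (subst buys_contr) (auto simp: algebra_simps mult_le_0_iff)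
    thus "(qH / qL \<le> 1 \<longrightarrow> (\<forall>i\<in>{-1/2..1/2}. buys qH q1 q2 qL Controversial i))
        \<and> (qH / qL > 1 \<longrightarrow> (\<forall>i\<in>{-1/2..1/2}. \<not> buys qH q1 q2 qL Controversial i))"
      using q by (simp add: field_simps)
  qed
  show ?thesis using A B C D E by blast
qed

end
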